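(* Let $K\ge1$, $\beta_1\in(0,1)$, $\rho_1>0$, and let $\alpha_1\ge\cdots\ge\alpha_K>0$ be non-increasing. Define $\eta_1=\frac{\alpha_1}{1-\beta_1}$ if $\alpha_k=\alpha_1$ for all $k\in[K]$, and $\eta_1=\sum_{i=1}^K\alpha_i\beta_1^{i-1}$ otherwise; and for $2\le k\le K$ define recursively $$\eta_k=\frac{\eta_{k-1}-\alpha_{k-1}}{\beta_1},\qquad \rho_k=\frac{\rho_{k-1}}{\beta_1+\frac{\alpha_{k-1}}{\eta_k}}.$$ Then $\{\rho_j\}_{j=1}^K$ is non-increasing, $$\frac{\sum_{k=j-1}^t\alpha_k\beta_1^{k-(j-1)}}{\rho_{j-1}}-\frac{\sum_{k=j}^t\alpha_k\beta_1^{k-j}}{\rho_j}\ge 0\quad\text{for all }2\le j\le t\le K,$$ and $$\rho_j\le\frac{\rho_1\alpha_j}{\alpha_1(1-\beta_1)}\quad\text{for all }j\in[K].$$ Moreover, if $\alpha_j=\alpha_1$ for all $j\in[K]$, then $\eta_j=\frac{\alpha_1}{1-\beta_1}$ and $\rho_j=\rho_1$ for all $j\in[K]$.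
   Context: $[K]=\{1,\dots,K\}$. *)

theory Defs
  imports Complex_Main
begin

definition eta1 :: "nat \<Rightarrow> (nat \<Rightarrow> real) \<Rightarrow> real \<Rightarrow> real" where
  "eta1 K \<alpha> \<beta> = (if (\<forall>k\<in>{1..K}. \<alpha> k = \<alpha> 1) then \<alpha> 1 / (1 - \<beta>)
                    else (\<Sum>i=1..K. \<alpha> i * \<beta> ^ (i - 1)))"

text \<open>etaS K alpha beta n = eta_{n+1} (shifted index).\<close>
primrec etaS :: "nat \<Rightarrow> (nat \<Rightarrow> real) \<Rightarrow> real \<Rightarrow> nat \<Rightarrow> real" where
  "etaS K \<alpha> \<beta> 0 = eta1 K \<alpha> \<beta>"
| "etaS K \<alpha> \<beta> (Suc n) = (etaS K \<alpha> \<beta> n - \<alpha> (Suc n)) / \<beta>"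

text \<open>rhoS K alpha beta rho1 n = rho_{n+1} (shifted index).\<close>
primrec rhoS :: "nat \<Rightarrow> (nat \<Rightarrow> real) \<Rightarrow> real \<Rightarrow> real \<Rightarrow> nat \<Rightarrow> real" where
  "rhoS K \<alpha> \<beta> \<rho>1 0 = \<rho>1"
| "rhoS K \<alpha> \<beta> \<rho>1 (Suc n) =
     rhoS K \<alpha> \<beta> \<rho>1 n / (\<beta> + \<alpha> (Suc n) / etaS K \<alpha> \<beta> (Suc n))"

text \<open>1-based versions: eta k = eta_k, rho k = rho_k for k >= 1.\<close>
definition eta :: "nat \<Rightarrow> (nat \<Rightarrow> real) \<Rightarrow> real \<Rightarrow> nat \<Rightarrow> real" where
  "eta K \<alpha> \<beta> k = etaS K \<alpha> \<beta> (k - 1)"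

definition rho :: "nat \<Rightarrow> (nat \<Rightarrow> real) \<Rightarrow> real \<Rightarrow> real \<Rightarrow> nat \<Rightarrow> real" where
  "rho K \<alpha> \<beta> \<rho>1 k = rhoS K \<alpha> \<beta> \<rho>1 (k - 1)"

end

theory Submission
  imports Defs
begin

lemma split_sum:
  fixes f :: "nat \<Rightarrow> real"
  assumes "n \<le> t"
  shows "(\<Sum>k=n..t. f k * b^(k-n)) = f n + b * (\<Sum>k=Suc n..t. f k * b^(k - Suc n))"
proof -
  have "(\<Sum>k=n..t. f k * b^(k-n)) = f n * b^(n-n) + (\<Sum>k=Suc n..t. f k * b^(k-n))"
    using assms by (simp add: sum.atLeast_Suc_atMost)
  also have "(\<Sum>k=Suc n..t. f k * b^(k-n)) = (\<Sum>k=Suc n..t. b * (f k * b^(k - Suc n)))"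
  proof (rule sum.cong)
    fix k assume "k \<in> {Suc n..t}"
    then have "k - n = Suc (k - Suc n)" by auto
    then show "f k * b^(k-n) = b * (f k * b^(k - Suc n))" by simp
  qed simp
  finally show ?thesis by (simp add: sum_distrib_left)
qed

lemma eta_closed:
  "etaS K \<alpha> \<beta> n * \<beta>^n = eta1 K \<alpha> \<beta> - (\<Sum>i=1..n. \<alpha> i * \<beta>^(i-1))" if "\<beta> \<noteq> 0"
proof (induction n)
  case 0 then show ?case by simp
next
  case (Suc n)
  have "etaS K \<alpha> \<beta> (Suc n) * \<beta>^(Suc n) = (etaS K \<alpha> \<beta> n - \<alpha> (Suc n)) * \<beta>^n"
    using that by simp
  also have "\<dots> = etaS K \<alpha> \<beta> n * \<beta>^n - \<alpha> (Suc n) * \<beta>^n" by (simp add: algebra_simps)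
  finally show ?case using Suc by (simp add: sum.cl_ivl_Suc)
qed

theorem lemma2:
  fixes K :: nat and \<alpha> :: "nat \<Rightarrow> real" and \<beta> \<rho>1 :: real
  assumes "K \<ge> 1"
    and "0 < \<beta>" and "\<beta> < 1"
    and "\<rho>1 > 0"
    and "\<And>i j. 1 \<le> i \<Longrightarrow> i \<le> j \<Longrightarrow> j \<le> K \<Longrightarrow> \<alpha> j \<le> \<alpha> i"
    and "\<And>i. 1 \<le> i \<Longrightarrow> i \<le> K \<Longrightarrow> \<alpha> i > 0"
  shows "(\<forall>j. 2 \<le> j \<and> j \<le> K \<longrightarrow> rho K \<alpha> \<beta> \<rho>1 j \<le> rho K \<alpha> \<beta> \<rho>1 (j - 1))
       \<and> (\<forall>j t. 2 \<le> j \<and> j \<le> t \<and> t \<le> K \<longrightarrow>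
            (\<Sum>k=j-1..t. \<alpha> k * \<beta> ^ (k - (j - 1))) / rho K \<alpha> \<beta> \<rho>1 (j - 1)
          - (\<Sum>k=j..t. \<alpha> k * \<beta> ^ (k - j)) / rho K \<alpha> \<beta> \<rho>1 j \<ge> 0)
       \<and> (\<forall>j. 1 \<le> j \<and> j \<le> K \<longrightarrow> rho K \<alpha> \<beta> \<rho>1 j \<le> \<rho>1 * \<alpha> j / (\<alpha> 1 * (1 - \<beta>)))
       \<and> ((\<forall>j. 1 \<le> j \<and> j \<le> K \<longrightarrow> \<alpha> j = \<alpha> 1) \<longrightarrow>
            (\<forall>j. 1 \<le> j \<and> j \<le> K \<longrightarrow> eta K \<alpha> \<beta> j = \<alpha> 1 / (1 - \<beta>) \<and> rho K \<alpha> \<beta> \<rho>1 j = \<rho>1))"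
proof -
  note K = assms(1) and b0 = assms(2) and b1 = assms(3) and r0 = assms(4)
    and mono = assms(5) and apos = assms(6)
  define e where "e = etaS K \<alpha> \<beta>"
  define r where "r = rhoS K \<alpha> \<beta> \<rho>1"
  define C where "C = (\<forall>k\<in>{1..K}. \<alpha> k = \<alpha> 1)"
  have F1: "e n = \<alpha> (Suc n) + \<beta> * e (Suc n)" for n
    using b0 by (simp add: e_def)
  have Cconst: "e n = \<alpha> 1 / (1 - \<beta>)" if "C" "n < K" for n
    using that(2)
  proof (induction n)
    case 0
    have "\<forall>k\<in>{1..K}. \<alpha> k = \<alpha> 1" using that(1) unfolding C_def .
    then show ?case unfolding e_def etaS.simps eta1_def by (rule if_P)
  next
    case (Suc n)
    have mem: "Suc n \<in> {1..K}" using Suc.prems by simp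
    have a: "\<alpha> (Suc n) = \<alpha> 1" using that(1) mem unfolding C_def by (rule bspec)
    have en: "e n = \<alpha> 1 / (1 - \<beta>)" using Suc.IH Suc.prems by simp
    have "e (Suc n) = (e n - \<alpha> (Suc n)) / \<beta>" unfolding e_def etaS.simps by (rule refl)
    also have "(e n - \<alpha> (Suc n)) / \<beta> = (\<alpha> 1 / (1 - \<beta>) - \<alpha> 1) / \<beta>" by (simp only: en a)
    also have "\<dots> = \<alpha> 1 / (1 - \<beta>)"
    proof -
      have "1 - \<beta> \<noteq> 0" "\<beta> \<noteq> 0" using b0 b1 by auto
      then show ?thesis by (simp add: field_simps)
    qed
    finally show ?case .
  qed
  have F2: "\<alpha> K \<le> e (K - 1) \<and> (1 - \<beta>) * e (K - 1) \<le> \<alpha> K"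
  proof (cases C)
    case True
    then have eK: "e (K-1) = \<alpha> 1 / (1 - \<beta>)" using Cconst K by simp
    have memK: "K \<in> {1..K}" using K by simp
    have aK: "\<alpha> K = \<alpha> 1" using True memK unfolding C_def by (rule bspec)
    have "\<alpha> 1 > 0" using apos K by simp
    then have h1: "\<alpha> 1 \<le> \<alpha> 1 / (1 - \<beta>)" using b0 b1 by (simp add: le_divide_eq)
    have h2: "(1 - \<beta>) * (\<alpha> 1 / (1 - \<beta>)) = \<alpha> 1" using b1 by simp
    show ?thesis unfolding eK aK using h1 h2 by simp
  next
    case False
    have "e (K-1) * \<beta>^(K-1) = eta1 K \<alpha> \<beta> - (\<Sum>i=1..K-1. \<alpha> i * \<beta>^(i-1))"
      using eta_closed[of \<beta> K \<alpha> "K-1"] b0 by (simp add: e_def)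
    also have "eta1 K \<alpha> \<beta> = (\<Sum>i=1..K. \<alpha> i * \<beta>^(i-1))"
    proof -
      have "\<not> (\<forall>k\<in>{1..K}. \<alpha> k = \<alpha> 1)" using False unfolding C_def .
      then show ?thesis unfolding eta1_def by (rule if_not_P)
    qed
    finally have X: "e (K-1) * \<beta>^(K-1) = (\<Sum>i=1..K. \<alpha> i * \<beta>^(i-1)) - (\<Sum>i=1..K-1. \<alpha> i * \<beta>^(i-1))" .
    obtain m where m: "K = Suc m" using K by (cases K) auto
    have "(\<Sum>i=1..Suc m. \<alpha> i * \<beta>^(i-1)) = (\<Sum>i=1..m. \<alpha> i * \<beta>^(i-1)) + \<alpha> (Suc m) * \<beta>^m"
      by (simp add: sum.cl_ivl_Suc)
    then have "e (K-1) * \<beta>^(K-1) = \<alpha> K * \<beta>^(K-1)" using X unfolding m by simp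
    then have "e (K-1) = \<alpha> K" using b0 by simp
    moreover have "\<alpha> K > 0" using apos K by simp
    ultimately show ?thesis using b0 b1 by (simp add: mult_le_cancel_right1)
  qed
  have F3: "\<alpha> (Suc n) \<le> e n \<and> (1 - \<beta>) * e n \<le> \<alpha> (Suc n)" if "n < K" for n
  proof -
    have "n \<le> K - 1" using that by simp
    then show ?thesis
    proof (induction n rule: inc_induct)
      case base then show ?case using F2 K by simp
    next
      case (step n)
      have h1: "\<alpha> (Suc (Suc n)) \<le> e (Suc n)" and h2: "(1 - \<beta>) * e (Suc n) \<le> \<alpha> (Suc (Suc n))"
        using step.IH by auto
      have p: "\<alpha> (Suc (Suc n)) > 0" using apos step.hyps by simp
      have m: "\<alpha> (Suc (Suc n)) \<le> \<alpha> (Suc n)" using mono[of "Suc n" "Suc (Suc n)"] step.hyps by simp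
      have "\<beta> * ((1 - \<beta>) * e (Suc n)) \<le> \<beta> * \<alpha> (Suc (Suc n))"
        using h2 b0 by (simp add: mult_left_mono)
      moreover have "\<beta> * \<alpha> (Suc (Suc n)) \<le> \<beta> * \<alpha> (Suc n)" using m b0 by (simp add: mult_left_mono)
      moreover have "\<beta> * e (Suc n) \<ge> 0" using h1 p b0 by simp
      ultimately show ?case using F1[of n] by (simp add: algebra_simps)
    qed
  qed
  have F3j: "\<alpha> j \<le> e (j-1) \<and> (1 - \<beta>) * e (j-1) \<le> \<alpha> j" if "1 \<le> j" "j \<le> K" for j
  proof -
    have "Suc (j-1) = j" using that by simp
    then show ?thesis using F3[of "j-1"] that by simp
  qed
  have epos: "e n > 0" if "n < K" for n
    using F3[OF that] apos[of "Suc n"] that by simp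
  have F4: "(\<Sum>k=j..t. \<alpha> k * \<beta>^(k-j)) \<le> e (j-1)" if "1 \<le> j" "j \<le> t" "t \<le> K" for j t
    using that(2,1)
  proof (induction j rule: inc_induct)
    case base then show ?case using F3[of "t-1"] that by simp
  next
    case (step n)
    have "(\<Sum>k=n..t. \<alpha> k * \<beta>^(k-n)) = \<alpha> n + \<beta> * (\<Sum>k=Suc n..t. \<alpha> k * \<beta>^(k - Suc n))"
      using split_sum step.hyps by simp
    also have "\<dots> \<le> \<alpha> n + \<beta> * e n"
      using step.IH step.prems b0 by (simp add: mult_left_mono)
    also have "\<dots> = e (n-1)" using F1[of "n-1"] step.prems by simp
    finally show ?case .
  qed
  have eta1e: "eta1 K \<alpha> \<beta> = e 0" by (simp add: e_def)
  have F5: "r n * e 0 = \<rho>1 * e n" if "n < K" for n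
    using that
  proof (induction n)
    case 0 then show ?case by (simp add: r_def)
  next
    case (Suc n)
    have p1: "e n > 0" "e (Suc n) > 0" using epos Suc.prems by auto
    have "\<beta> + \<alpha> (Suc n) / e (Suc n) = e n / e (Suc n)"
      using F1[of n] p1 by (simp add: field_simps)
    then have "r (Suc n) = r n * e (Suc n) / e n" using p1 by (simp add: r_def e_def)
    then have "r (Suc n) * e 0 = (r n * e 0) * e (Suc n) / e n" by simp
    also have "\<dots> = \<rho>1 * e (Suc n)" using Suc p1 by simp
    finally show ?case .
  qed
  have e0: "e 0 > 0" using epos K by simp
  have rr: "rho K \<alpha> \<beta> \<rho>1 j = \<rho>1 * e (j-1) / e 0" if "1 \<le> j" "j \<le> K" for j
    using F5[of "j-1"] that e0 unfolding rho_def r_def[symmetric] by (simp add: field_simps)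
  have a1e: "\<alpha> 1 \<le> e 0" using F3[of 0] K by simp
  have P1: "\<forall>j. 2 \<le> j \<and> j \<le> K \<longrightarrow> rho K \<alpha> \<beta> \<rho>1 j \<le> rho K \<alpha> \<beta> \<rho>1 (j - 1)"
  proof (intro allI impI)
    fix j assume j: "2 \<le> j \<and> j \<le> K"
    obtain i where ji: "j = Suc (Suc i)" using j by (metis add_2_eq_Suc le_Suc_ex)
    have iK: "Suc (Suc i) \<le> K" using j ji by simp
    have le: "e (Suc i) \<le> e i"
    proof -
      have "(1 - \<beta>) * e (Suc i) \<le> \<alpha> (Suc (Suc i))" using F3[of "Suc i"] iK by simp
      moreover have "\<alpha> (Suc (Suc i)) \<le> \<alpha> (Suc i)" using mono[of "Suc i" "Suc (Suc i)"] iK by simp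
      moreover have "e i = \<alpha> (Suc i) + \<beta> * e (Suc i)" using F1[of i] .
      ultimately show ?thesis by (simp add: algebra_simps)
    qed
    have R1: "rho K \<alpha> \<beta> \<rho>1 (Suc i) = \<rho>1 * e i / e 0" using rr[of "Suc i"] iK by simp
    have R2: "rho K \<alpha> \<beta> \<rho>1 (Suc (Suc i)) = \<rho>1 * e (Suc i) / e 0" using rr[of "Suc (Suc i)"] iK by simp
    have "\<rho>1 * e (Suc i) / e 0 \<le> \<rho>1 * e i / e 0" using le r0 e0 by (simp add: divide_right_mono)
    then show "rho K \<alpha> \<beta> \<rho>1 j \<le> rho K \<alpha> \<beta> \<rho>1 (j - 1)" using R1 R2 ji by simp
  qed
  have P2: "\<forall>j t. 2 \<le> j \<and> j \<le> t \<and> t \<le> K \<longrightarrow>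
            (\<Sum>k=j-1..t. \<alpha> k * \<beta> ^ (k - (j - 1))) / rho K \<alpha> \<beta> \<rho>1 (j - 1)
          - (\<Sum>k=j..t. \<alpha> k * \<beta> ^ (k - j)) / rho K \<alpha> \<beta> \<rho>1 j \<ge> 0"
  proof (intro allI impI)
    fix j t assume jt: "2 \<le> j \<and> j \<le> t \<and> t \<le> K"
    obtain i where ji: "j = Suc (Suc i)" using jt by (metis add_2_eq_Suc le_Suc_ex)
    have iK: "Suc (Suc i) \<le> t" "t \<le> K" using jt ji by auto
    define S where "S = (\<Sum>k=Suc (Suc i)..t. \<alpha> k * \<beta> ^ (k - Suc (Suc i)))"
    have Sj: "(\<Sum>k=Suc i..t. \<alpha> k * \<beta> ^ (k - Suc i)) = \<alpha> (Suc i) + \<beta> * S"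
      using split_sum[of "Suc i" t \<alpha> \<beta>] iK by (simp add: S_def)
    have SE: "S \<le> e (Suc i)" using F4[of "Suc (Suc i)" t] iK by (simp add: S_def)
    have E: "e i = \<alpha> (Suc i) + \<beta> * e (Suc i)" using F1[of i] .
    have pa: "\<alpha> (Suc i) > 0" using apos[of "Suc i"] iK by simp
    have pe1: "e (Suc i) > 0" and pe2: "e i > 0" using epos iK by auto
    have R1: "rho K \<alpha> \<beta> \<rho>1 (Suc i) = \<rho>1 * e i / e 0" using rr[of "Suc i"] iK by simp
    have R2: "rho K \<alpha> \<beta> \<rho>1 (Suc (Suc i)) = \<rho>1 * e (Suc i) / e 0" using rr[of "Suc (Suc i)"] iK by simp
    have key: "S * e i \<le> (\<alpha> (Suc i) + \<beta> * S) * e (Suc i)"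
    proof -
      have "S * e i = S * \<alpha> (Suc i) + \<beta> * S * e (Suc i)" using E by (simp add: algebra_simps)
      moreover have "S * \<alpha> (Suc i) \<le> e (Suc i) * \<alpha> (Suc i)" using SE pa by simp
      ultimately show ?thesis by (simp add: algebra_simps)
    qed
    have "S / (\<rho>1 * e (Suc i) / e 0) = (S * e i) * (e 0 / (\<rho>1 * e (Suc i) * e i))"
      using pe1 pe2 r0 by (simp add: field_simps)
    also have "\<dots> \<le> ((\<alpha> (Suc i) + \<beta> * S) * e (Suc i)) * (e 0 / (\<rho>1 * e (Suc i) * e i))"
      using key pe1 pe2 r0 e0 by (intro mult_right_mono) simp_all
    also have "\<dots> = (\<alpha> (Suc i) + \<beta> * S) / (\<rho>1 * e i / e 0)"
      using pe1 pe2 r0 by (simp add: field_simps)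
    finally have "S / (\<rho>1 * e (Suc i) / e 0) \<le> (\<alpha> (Suc i) + \<beta> * S) / (\<rho>1 * e i / e 0)" .
    then show "(\<Sum>k=j-1..t. \<alpha> k * \<beta> ^ (k - (j - 1))) / rho K \<alpha> \<beta> \<rho>1 (j - 1)
          - (\<Sum>k=j..t. \<alpha> k * \<beta> ^ (k - j)) / rho K \<alpha> \<beta> \<rho>1 j \<ge> 0"
      using Sj R1 R2 ji by (simp add: S_def)
  qed
  have P3: "\<forall>j. 1 \<le> j \<and> j \<le> K \<longrightarrow> rho K \<alpha> \<beta> \<rho>1 j \<le> \<rho>1 * \<alpha> j / (\<alpha> 1 * (1 - \<beta>))"
  proof (intro allI impI)
    fix j assume j: "1 \<le> j \<and> j \<le> K"
    have h: "(1 - \<beta>) * e (j-1) \<le> \<alpha> j" using F3j[of j] j by simp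
    have a1: "\<alpha> 1 > 0" using apos K by simp
    have aj: "\<alpha> j > 0" using apos j by simp
    have "rho K \<alpha> \<beta> \<rho>1 j = \<rho>1 * e (j-1) / e 0" using rr j by simp
    also have "\<dots> \<le> \<rho>1 * (\<alpha> j / (1 - \<beta>)) / e 0"
      using h b1 r0 e0 by (intro divide_right_mono mult_left_mono) (simp_all add: field_simps)
    also have "\<dots> \<le> \<rho>1 * (\<alpha> j / (1 - \<beta>)) / \<alpha> 1"
      using a1e a1 r0 aj b1 by (intro divide_left_mono) simp_all
    also have "\<dots> = \<rho>1 * \<alpha> j / (\<alpha> 1 * (1 - \<beta>))" by simp
    finally show "rho K \<alpha> \<beta> \<rho>1 j \<le> \<rho>1 * \<alpha> j / (\<alpha> 1 * (1 - \<beta>))" .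
  qed
  have P4: "(\<forall>j. 1 \<le> j \<and> j \<le> K \<longrightarrow> \<alpha> j = \<alpha> 1) \<longrightarrow>
            (\<forall>j. 1 \<le> j \<and> j \<le> K \<longrightarrow> eta K \<alpha> \<beta> j = \<alpha> 1 / (1 - \<beta>) \<and> rho K \<alpha> \<beta> \<rho>1 j = \<rho>1)"
  proof (intro impI allI)
    fix j assume c: "\<forall>j. 1 \<le> j \<and> j \<le> K \<longrightarrow> \<alpha> j = \<alpha> 1" and j: "1 \<le> j \<and> j \<le> K"
    have CC: C unfolding C_def
    proof
      fix k assume "k \<in> {1..K}"
      then have "1 \<le> k \<and> k \<le> K" by simp
      then show "\<alpha> k = \<alpha> 1" using c by blast
    qed
    have j1: "j - 1 < K" using j by arith
    have E1: "e (j-1) = \<alpha> 1 / (1 - \<beta>)" using Cconst[OF CC j1] .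
    have E0: "e 0 = \<alpha> 1 / (1 - \<beta>)" using Cconst[OF CC] K by simp
    have H1: "eta K \<alpha> \<beta> j = e (j-1)" unfolding eta_def e_def by (rule refl)
    have H2: "rho K \<alpha> \<beta> \<rho>1 j = \<rho>1 * e (j-1) / e 0" using rr j by simp
    show "eta K \<alpha> \<beta> j = \<alpha> 1 / (1 - \<beta>) \<and> rho K \<alpha> \<beta> \<rho>1 j = \<rho>1"
    proof -
      have "e (j-1) = e 0" using E1 E0 by simp
      then show ?thesis using H1 H2 E1 e0 by simp
    qed
  qed
  show ?thesis using P1 P2 P3 P4 by blast
qed

end
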